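(* Let $f$ be analytic on $\mathbb{D}$ with $f(z)=z+\sum_{n=2}^{\infty}a_nz^n$ and $\operatorname{Re}f'(z)>0$ for all $z\in\mathbb{D}$, and let $\gamma_1=\frac12a_2$, $\gamma_2=\frac12\left(a_3-\frac12a_2^2\right)$. Then $$-\frac{1}{\sqrt5}\le|\gamma_2|-|\gamma_1|\le\frac13.$$ Both inequalities are sharp.
   Context: $\mathbb{D}=\{z\in\mathbb{C}:|z|<1\}$. The class of such $f$ is the class $\mathcal{R}$ of functions of bounded turning. $\gamma_1,\gamma_2$ are the first two logarithmic coefficients, defined by $\log\frac{f(z)}{z}=2\sum_{n\ge1}\gamma_nz^n$ near $0$. *)

theory Defs
  imports "HOL-Complex_Analysis.Complex_Analysis"
begin

definition taylor_coeff :: "(complex \<Rightarrow> complex) \<Rightarrow> nat \<Rightarrow> complex" where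
  "taylor_coeff f n = (deriv ^^ n) f 0 / of_nat (fact n)"

definition bounded_turning :: "(complex \<Rightarrow> complex) \<Rightarrow> bool" where
  "bounded_turning f \<longleftrightarrow> f holomorphic_on ball 0 1 \<and> f 0 = 0 \<and> deriv f 0 = 1 \<and>
     (\<forall>z\<in>ball 0 1. Re (deriv f z) > 0)"

definition gamma1 :: "(complex \<Rightarrow> complex) \<Rightarrow> complex" where
  "gamma1 f = taylor_coeff f 2 / 2"

definition gamma2 :: "(complex \<Rightarrow> complex) \<Rightarrow> complex" where
  "gamma2 f = (taylor_coeff f 3 - (taylor_coeff f 2)^2 / 2) / 2"

end

theory Submission
  imports Defs
begin

lemma re_pos_frac:
  fixes w :: complex assumes "cmod w < 1" shows "Re ((1+w)/(1-w)) > 0"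
proof -
  have "(cmod w)^2 < 1" using assms by (simp add: abs_square_less_1)
  hence a: "(Re w)^2 + (Im w)^2 < 1" by (simp add: cmod_power2)
  have "w \<noteq> 1" using assms by auto
  hence "cmod (1-w) > 0" by simp
  hence "(cmod (1-w))^2 > 0" by simp
  hence b: "(Re (1-w))^2 + (Im (1-w))^2 > 0" by (simp only: cmod_power2)
  have "Re ((1+w)/(1-w)) = (1 - ((Re w)^2 + (Im w)^2)) / ((Re (1-w))^2 + (Im (1-w))^2)"
    by (simp add: Re_divide algebra_simps power2_eq_square)
  thus ?thesis using a b by simp
qed

lemma norm_cayley:
  fixes p :: complex assumes "Re p > 0" shows "cmod ((p - 1)/(p + 1)) < 1"
proof -
  have "Re (p + 1) > 0" using assms by simp
  hence "p + 1 \<noteq> 0" by (intro notI) simp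
  moreover have "cmod (p - 1) < cmod (p + 1)"
  proof -
    have "(cmod (p-1))^2 < (cmod (p+1))^2"
      unfolding cmod_power2 using assms by (simp add: power2_eq_square algebra_simps)
    thus ?thesis by (rule power_less_imp_less_base[OF _ norm_ge_zero])
  qed
  ultimately show ?thesis by (simp add: norm_divide divide_less_eq)
qed

lemma primitive_exists:
  assumes "p holomorphic_on ball 0 1"
  shows "\<exists>f. f holomorphic_on ball 0 1 \<and> f 0 = 0 \<and> (\<forall>z\<in>ball 0 1. deriv f z = p z)"
proof -
  obtain g where g: "\<And>x. x \<in> ball 0 1 \<Longrightarrow> (g has_field_derivative p x) (at x within ball 0 1)"
    using holomorphic_convex_primitive'[OF convex_ball open_ball assms] by blast
  have g': "(g has_field_derivative p x) (at x)" if "x \<in> ball 0 1" for x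
    using g[OF that] that at_within_open[OF that open_ball] by simp
  define f where "f z = g z - g 0" for z
  have f': "(f has_field_derivative p x) (at x)" if "x \<in> ball 0 1" for x
  proof -
    have "((\<lambda>z. g z - g 0) has_field_derivative p x - 0) (at x)"
      by (intro DERIV_diff g'[OF that] DERIV_const)
    thus ?thesis by (simp add: f_def[abs_def])
  qed
  have "f holomorphic_on ball 0 1"
    unfolding holomorphic_on_def field_differentiable_def
    using f' has_field_derivative_at_within by blast
  moreover have "\<forall>z\<in>ball 0 1. deriv f z = p z" using f' DERIV_imp_deriv by blast
  moreover have "f 0 = 0" by (simp add: f_def)
  ultimately show ?thesis by blast
qed
lemma pick_r:
  assumes hh: "h holomorphic_on ball 0 1" and hle: "\<And>z. norm z < 1 \<Longrightarrow> norm (h z) \<le> 1"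
    and r: "0 < r" "r < 1"
  shows "r * norm (deriv h 0) \<le> 1 - r^2 * (norm (h 0))^2"
proof -
  define a where "a = complex_of_real r * h 0"
  define H where "H z = complex_of_real r * h z" for z
  have Hn: "norm (H z) < 1" if "norm z < 1" for z
  proof -
    have "norm (H z) = r * norm (h z)" using r by (simp add: H_def norm_mult)
    also have "\<dots> \<le> r" using hle[OF that] r by (simp add: mult_left_le)
    finally show ?thesis using r by simp
  qed
  have an: "norm a < 1" using Hn[of 0] by (simp add: a_def H_def)
  have den: "1 - cnj a * H z \<noteq> 0" if "norm z < 1" for z
  proof
    assume "1 - cnj a * H z = 0"
    hence "cnj a * H z = 1" by simp
    hence "norm (cnj a * H z) = 1" by simp
    moreover have "norm (cnj a * H z) < 1"
    proof -
      have "norm a * norm (H z) \<le> norm (H z)"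
        by (rule mult_left_le_one_le) (use an in auto)
      thus ?thesis using Hn[OF that] by (simp add: norm_mult)
    qed
    ultimately show False by simp
  qed
  define g where "g z = (H z - a) / (1 - cnj a * H z)" for z
  have Hh: "H holomorphic_on ball 0 1" unfolding H_def[abs_def] by (intro holomorphic_intros hh)
  have gh: "g holomorphic_on ball 0 1"
    unfolding g_def[abs_def] using den by (intro holomorphic_intros Hh) auto
  have g0: "g 0 = 0" by (simp add: g_def H_def a_def)
  have gn: "norm (g z) < 1" if "norm z < 1" for z
    using Moebius_function_norm_lt_1[OF an Hn[OF that], of 0]
    by (simp add: Moebius_function_simple g_def)
  have dg1: "norm (deriv g 0) \<le> 1"
    using Schwarz_Lemma'[OF gh g0 gn] by blast
  have dh: "(h has_field_derivative deriv h 0) (at 0)"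
    using holomorphic_derivI[OF hh open_ball, of 0 UNIV] by simp
  have dH: "(H has_field_derivative r * deriv h 0) (at 0)"
    unfolding H_def[abs_def] by (auto intro!: derivative_eq_intros dh)
  have H0: "H 0 = a" by (simp add: H_def a_def)
  have d0: "1 - cnj a * a \<noteq> 0" using den[of 0] H0 by simp
  have "(g has_field_derivative
     ((r * deriv h 0) * (1 - cnj a * H 0) - (H 0 - a) * (- (cnj a * (r * deriv h 0)))) / ((1 - cnj a * H 0) * (1 - cnj a * H 0))) (at 0)"
  proof -
    have d1: "((\<lambda>x. H x - a) has_field_derivative r * deriv h 0) (at 0)"
      using DERIV_diff[OF dH DERIV_const] by simp
    have d2: "((\<lambda>x. 1 - cnj a * H x) has_field_derivative - (cnj a * (r * deriv h 0))) (at 0)"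
      using DERIV_diff[OF DERIV_const DERIV_cmult[OF dH]] by simp
    show ?thesis unfolding g_def[abs_def]
      using DERIV_divide[OF d1 d2 den[of 0]] by simp
  qed
  hence dg: "deriv g 0 = r * deriv h 0 / (1 - cnj a * a)"
    using d0 by (simp add: H0 DERIV_imp_deriv)
  have ca: "cnj a * a = complex_of_real ((norm a)^2)"
    using complex_norm_square[of a] by (simp add: mult.commute)
  have na: "norm a = r * norm (h 0)" using r by (simp add: a_def norm_mult)
  have pos: "1 - (norm a)^2 > 0"
  proof -
    have "(norm a)^2 < 1" using an by (simp add: abs_square_less_1)
    thus ?thesis by simp
  qed
  have n1: "norm (1 - cnj a * a) = 1 - (norm a)^2"
  proof -
    have "1 - cnj a * a = complex_of_real (1 - (norm a)^2)" unfolding ca by simp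
    hence "norm (1 - cnj a * a) = abs (1 - (norm a)^2)" by (simp only: norm_of_real)
    thus ?thesis using pos by simp
  qed
  have "norm (deriv g 0) = r * norm (deriv h 0) / (1 - (norm a)^2)"
    unfolding dg using r by (simp add: norm_mult norm_divide n1)
  with dg1 pos have "r * norm (deriv h 0) \<le> 1 - (norm a)^2" by (simp add: divide_le_eq)
  thus ?thesis unfolding na by (simp add: power_mult_distrib)
qed

lemma pick:
  assumes hh: "h holomorphic_on ball 0 1" and hle: "\<And>z. norm z < 1 \<Longrightarrow> norm (h z) \<le> 1"
  shows "norm (deriv h 0) \<le> 1 - (norm (h 0))^2"
proof -
  have "(\<lambda>r. r * norm (deriv h 0)) \<midarrow>1\<rightarrow> 1 * norm (deriv h 0)"
    by (intro tendsto_intros)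
  hence l1: "((\<lambda>r. r * norm (deriv h 0)) \<longlongrightarrow> norm (deriv h 0)) (at_left 1)"
    by (simp add: filterlim_at_split)
  have "(\<lambda>r::real. 1 - r^2 * (norm (h 0))^2) \<midarrow>1\<rightarrow> 1 - 1^2 * (norm (h 0))^2"
    by (intro tendsto_intros)
  hence l2: "((\<lambda>r::real. 1 - r^2 * (norm (h 0))^2) \<longlongrightarrow> 1 - (norm (h 0))^2) (at_left 1)"
    by (simp add: filterlim_at_split)
  have ev: "eventually (\<lambda>r. r * norm (deriv h 0) \<le> 1 - r^2 * (norm (h 0))^2) (at_left (1::real))"
    by (rule eventually_mono[OF eventually_at_left_real[of 0 1]]) (auto intro: pick_r[OF hh hle])
  show ?thesis
    by (rule tendsto_le[OF trivial_limit_at_left_real l2 l1 ev])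
qed
lemma tc2: "taylor_coeff f 2 = deriv (deriv f) 0 / 2"
  by (simp add: taylor_coeff_def numeral_eq_Suc)
lemma tc3: "taylor_coeff f 3 = deriv (deriv (deriv f)) 0 / 6"
  by (simp add: taylor_coeff_def numeral_eq_Suc)

lemma key:
  assumes bt: "bounded_turning f"
  shows "\<exists>u v. cmod u \<le> 1 \<and> cmod v \<le> 1 - (cmod u)^2 \<and> gamma1 f = u/2 \<and> gamma2 f = v/3 + u^2/12"
proof -
  define D where "D = ball (0::complex) 1"
  have oD: "open D" and zD: "0 \<in> D" by (auto simp: D_def)
  have fh: "f holomorphic_on D" and df0: "deriv f 0 = 1" and fre: "\<And>z. z \<in> D \<Longrightarrow> Re (deriv f z) > 0"
    using bt by (auto simp: bounded_turning_def D_def)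
  define p where "p = deriv f"
  have ph: "p holomorphic_on D" unfolding p_def using holomorphic_deriv[OF fh oD] .
  have p0: "p 0 = 1" using df0 by (simp add: p_def)
  have pre: "\<And>z. z \<in> D \<Longrightarrow> Re (p z) > 0" using fre by (simp add: p_def)
  have pn: "p z + 1 \<noteq> 0" if "z \<in> D" for z
  proof
    assume "p z + 1 = 0"
    hence "Re (p z + 1) = 0" by simp
    thus False using pre[OF that] by simp
  qed
  define w where "w z = (p z - 1) / (p z + 1)" for z
  have wh: "w holomorphic_on ball 0 1"
    unfolding w_def[abs_def] using pn ph by (intro holomorphic_intros) (auto simp: D_def)
  have w0: "w 0 = 0" by (simp add: w_def p0)
  have wn: "norm (w z) < 1" if "norm z < 1" for z
    unfolding w_def using norm_cayley[OF pre, of z] that by (simp add: D_def)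
  obtain h where hh: "h holomorphic_on ball 0 1" and wz: "\<And>z. norm z < 1 \<Longrightarrow> w z = z * h z"
      and dw: "deriv w 0 = h 0"
    using Schwarz3[OF wh w0] by blast
  have sch: "\<And>\<xi>. norm \<xi> < 1 \<Longrightarrow> norm (w \<xi>) \<le> norm \<xi>" and sch2: "norm (deriv w 0) \<le> 1"
    using Schwarz_Lemma'[OF wh w0 wn] by blast+
  have hle: "norm (h z) \<le> 1" if "norm z < 1" for z
  proof (cases "z = 0")
    case True thus ?thesis using sch2 dw by simp
  next
    case False
    have "norm z * norm (h z) \<le> norm z * 1" using sch[OF that] wz[OF that] by (simp add: norm_mult)
    thus ?thesis using False by simp
  qed
  have pid: "p z * (1 - z * h z) = 1 + z * h z" if "z \<in> D" for z
  proof -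
    have "z * h z = (p z - 1) / (p z + 1)" using wz[of z] that by (simp add: D_def w_def)
    hence "z * h z * (p z + 1) = p z - 1" using pn[OF that] by (simp add: field_simps)
    thus ?thesis by (simp add: algebra_simps)
  qed
  define p1 where "p1 = deriv p"
  define p2 where "p2 = deriv p1"
  define h1 where "h1 = deriv h"
  define h2 where "h2 = deriv h1"
  have hD: "h holomorphic_on D" using hh by (simp add: D_def)
  have p1h: "p1 holomorphic_on D" unfolding p1_def using holomorphic_deriv[OF ph oD] .
  have h1h: "h1 holomorphic_on D" unfolding h1_def using holomorphic_deriv[OF hD oD] .
  have dp: "(p has_field_derivative p1 z) (at z)" if "z \<in> D" for z
    unfolding p1_def using holomorphic_derivI[OF ph oD that, of UNIV] by simp
  have dp1: "(p1 has_field_derivative p2 z) (at z)" if "z \<in> D" for z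
    unfolding p2_def using holomorphic_derivI[OF p1h oD that, of UNIV] by simp
  have dh: "(h has_field_derivative h1 z) (at z)" if "z \<in> D" for z
    unfolding h1_def using holomorphic_derivI[OF hD oD that, of UNIV] by simp
  have dh1: "(h1 has_field_derivative h2 z) (at z)" if "z \<in> D" for z
    unfolding h2_def using holomorphic_derivI[OF h1h oD that, of UNIV] by simp
  define F1 where "F1 z = p1 z * (1 - z * h z) - p z * (h z + z * h1 z) - (h z + z * h1 z)" for z
  have F1z: "F1 z = 0" if "z \<in> D" for z
  proof -
    have a: "((\<lambda>z. p z * (1 - z * h z) - (1 + z * h z)) has_field_derivative F1 z) (at z)"
      unfolding F1_def
      by (auto intro!: derivative_eq_intros dp[OF that] dh[OF that] simp: algebra_simps)
    have b: "((\<lambda>z. p z * (1 - z * h z) - (1 + z * h z)) has_field_derivative 0) (at z)"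
      by (rule has_field_derivative_transform_within_open[OF DERIV_const oD that]) (simp add: pid)
    show ?thesis using DERIV_unique[OF a b] .
  qed
  have c1: "p1 0 = 2 * h 0" using F1z[OF zD] by (simp add: F1_def p0)
  have F1d: "(F1 has_field_derivative (p2 0 - 2 * p1 0 * h 0 - 4 * h1 0)) (at 0)"
    unfolding F1_def[abs_def]
    by (auto intro!: derivative_eq_intros dp[OF zD] dh[OF zD] dp1[OF zD] dh1[OF zD] simp: algebra_simps p0)
  have F1d0: "(F1 has_field_derivative 0) (at 0)"
    by (rule has_field_derivative_transform_within_open[OF DERIV_const oD zD]) (simp add: F1z)
  have c2: "p2 0 = 2 * p1 0 * h 0 + 4 * h1 0"
    using DERIV_unique[OF F1d F1d0] by (simp add: algebra_simps)
  have g1: "gamma1 f = h 0 / 2"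
    unfolding gamma1_def tc2 using c1 by (simp add: p1_def p_def)
  have g2: "gamma2 f = h1 0 / 3 + (h 0)^2 / 12"
    unfolding gamma2_def tc2 tc3 using c1 c2
    by (simp add: p2_def p1_def p_def field_simps power2_eq_square)
  have "norm (h1 0) \<le> 1 - (norm (h 0))^2"
    unfolding h1_def using pick[OF hh hle] .
  moreover have "norm (h 0) \<le> 1" using hle[of 0] by simp
  ultimately show ?thesis using g1 g2 by blast
qed

lemma ineq:
  fixes u v :: complex
  assumes hu: "cmod u \<le> 1" and hv: "cmod v \<le> 1 - (cmod u)^2"
  shows "- 1 / sqrt 5 \<le> cmod (v/3 + u^2/12) - cmod (u/2) \<and> cmod (v/3 + u^2/12) - cmod (u/2) \<le> 1/3"
proof -
  define t where "t = cmod u"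
  define s where "s = cmod v"
  have t0: "0 \<le> t" "t \<le> 1" using hu by (auto simp: t_def)
  have s0: "0 \<le> s" "s \<le> 1 - t^2" using hv by (auto simp: s_def t_def)
  have nu: "cmod (u/2) = t/2" by (simp add: t_def norm_divide)
  have nv: "cmod (v/3) = s/3" by (simp add: s_def norm_divide)
  have nu2: "cmod (u^2/12) = t^2/12" by (simp add: t_def norm_divide norm_power)
  have up: "cmod (v/3 + u^2/12) \<le> s/3 + t^2/12"
    using norm_triangle_ineq[of "v/3" "u^2/12"] nv nu2 by simp
  have lo: "cmod (v/3 + u^2/12) \<ge> t^2/12 - s/3"
    using norm_triangle_ineq2[of "u^2/12" "- (v/3)"] nv nu2 by (simp add: add.commute)
  have U: "cmod (v/3 + u^2/12) - cmod (u/2) \<le> 1/3"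
  proof -
    have "0 \<le> t^2" by simp
    hence "s/3 + t^2/12 - t/2 \<le> 1/3" using s0 t0 by linarith
    thus ?thesis using up nu by simp
  qed
  define q where "q = sqrt 5"
  have q: "q > 2" "q^2 = 5" unfolding q_def
    by (simp_all add: real_less_rsqrt)
  have L: "t/2 - 1/q \<le> cmod (v/3 + u^2/12)"
  proof (cases "t * q \<le> 2")
    case True
    hence "t/2 \<le> 1/q" using q by (simp add: field_simps)
    moreover have "0 \<le> cmod (v/3 + u^2/12)" by simp
    ultimately show ?thesis by linarith
  next
    case False
    have A: "(t*q - 2) * (q * (t*q + 2) - 6) \<ge> 0"
    proof (rule mult_nonneg_nonneg)
      show "0 \<le> t*q - 2" using False by simp
      have "q * (t*q+2) \<ge> 2 * 4" using False q by (intro mult_mono) auto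
      thus "0 \<le> q * (t*q+2) - 6" by simp
    qed
    have "(t*q - 2) * (q * (t*q + 2) - 6) = q * ((t*q)^2 - 4) - 6*t*q + 12"
      by (simp add: algebra_simps power2_eq_square)
    also have "(t*q)^2 = 5 * t^2" using q by (simp add: power_mult_distrib)
    finally have B: "q * (5*t^2 - 4) - 6*t*q + 12 \<ge> 0" using A by simp
    have "12 * q * ((5*t^2 - 4)/12 - (t/2 - 1/q)) = q * (5*t^2 - 4) - 6*t*q + 12"
      using q by (simp add: field_simps)
    hence "12 * q * ((5*t^2 - 4)/12 - (t/2 - 1/q)) \<ge> 0" using B by simp
    hence "(5*t^2 - 4)/12 - (t/2 - 1/q) \<ge> 0" using q
      by (simp add: zero_le_mult_iff)
    moreover have "(5*t^2-4)/12 \<le> t^2/12 - s/3" unfolding diff_divide_distrib using s0 by linarith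
    ultimately show ?thesis using lo by linarith
  qed
  show ?thesis using U L nu by (simp add: q_def)
qed

lemma deriv2:
  assumes "\<And>z. z \<in> ball 0 1 \<Longrightarrow> (p has_field_derivative P1 z) (at z)"
    and "(P1 has_field_derivative c) (at 0)"
  shows "deriv p 0 = P1 0" "deriv (deriv p) 0 = c"
proof -
  have e: "deriv p z = P1 z" if "z \<in> ball 0 1" for z using assms(1)[OF that] DERIV_imp_deriv by blast
  thus "deriv p 0 = P1 0" by simp
  have "(deriv p has_field_derivative c) (at 0)"
    by (rule has_field_derivative_transform_within_open[OF assms(2) open_ball, of 0 1]) (auto simp: e)
  thus "deriv (deriv p) 0 = c" by (rule DERIV_imp_deriv)
qed

lemma ext:
  assumes ph: "p holomorphic_on ball 0 1" and p0: "p 0 = 1" and pre: "\<And>z. z \<in> ball 0 1 \<Longrightarrow> Re (p z) > 0"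
  shows "\<exists>f. bounded_turning f \<and> taylor_coeff f 2 = deriv p 0 / 2 \<and> taylor_coeff f 3 = deriv (deriv p) 0 / 6"
proof -
  obtain f where fh: "f holomorphic_on ball 0 1" and f0: "f 0 = 0" and df: "\<forall>z\<in>ball 0 1. deriv f z = p z"
    using primitive_exists[OF ph] by blast
  have dfh: "deriv f holomorphic_on ball 0 1" using holomorphic_deriv[OF fh open_ball] .
  have e1: "deriv (deriv f) z = deriv p z" if "z \<in> ball 0 1" for z
    by (rule complex_derivative_transform_within_open[OF dfh ph open_ball that]) (simp add: df)
  have e2: "deriv (deriv (deriv f)) 0 = deriv (deriv p) 0"
    by (rule complex_derivative_transform_within_open[OF holomorphic_deriv[OF dfh open_ball]
          holomorphic_deriv[OF ph open_ball] open_ball]) (simp_all add: e1)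
  have "bounded_turning f" unfolding bounded_turning_def using fh f0 df p0 pre by auto
  thus ?thesis using e1[of 0] e2 by (auto simp: tc2 tc3)
qed

lemma ext_up: "\<exists>f. bounded_turning f \<and> cmod (gamma2 f) - cmod (gamma1 f) = 1 / 3"
proof -
  define p where "p z = (1 + z^2) / (1 - z^2)" for z :: complex
  have dn: "1 - z^2 \<noteq> 0" if "z \<in> ball 0 1" for z :: complex
  proof
    assume "1 - z^2 = 0"
    hence "norm (z^2) = 1" by simp
    moreover have "(cmod z)^2 < 1" using that by (simp add: abs_square_less_1)
    ultimately show False by (simp add: norm_power)
  qed
  have ph: "p holomorphic_on ball 0 1" unfolding p_def[abs_def] using dn by (intro holomorphic_intros) auto
  have p0: "p 0 = 1" by (simp add: p_def)
  have pre: "Re (p z) > 0" if "z \<in> ball 0 1" for z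
  proof -
    have "cmod (z^2) < 1" using that by (simp add: norm_power power_less_one_iff)
    thus ?thesis unfolding p_def by (rule re_pos_frac)
  qed
  define P1 where "P1 z = 4 * z / (1 - z^2)^2" for z :: complex
  have d1: "(p has_field_derivative P1 z) (at z)" if "z \<in> ball 0 1" for z
  proof -
    have n: "((\<lambda>z. 1 + z^2) has_field_derivative 2*z) (at z)" by (auto intro!: derivative_eq_intros)
    have m: "((\<lambda>z. 1 - z^2) has_field_derivative -(2*z)) (at z)" by (auto intro!: derivative_eq_intros)
    have "(p has_field_derivative ((2*z)*(1-z^2) - (1+z^2)*(-(2*z)))/((1-z^2)*(1-z^2))) (at z)"
      unfolding p_def[abs_def] by (rule DERIV_divide[OF n m dn[OF that]])
    moreover have "(2*z)*(1-z^2) - (1+z^2)*(-(2*z)) = 4*z" by (simp add: algebra_simps power2_eq_square)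
    moreover have "(1-z^2)*(1-z^2) = (1-z^2)^2" by (simp add: power2_eq_square)
    ultimately show ?thesis by (simp add: P1_def)
  qed
  have d2: "(P1 has_field_derivative 4) (at 0)"
    unfolding P1_def[abs_def] by (auto intro!: derivative_eq_intros)
  obtain f where bt: "bounded_turning f" and a2: "taylor_coeff f 2 = deriv p 0 / 2"
      and a3: "taylor_coeff f 3 = deriv (deriv p) 0 / 6"
    using ext[OF ph p0 pre] by blast
  have g1: "gamma1 f = 0" and g2: "gamma2 f = 1/3"
    using deriv2[OF d1 d2] unfolding gamma1_def gamma2_def a2 a3 by (simp_all add: P1_def)
  have "cmod (gamma2 f) = 1/3" unfolding g2 by (simp add: norm_divide)
  thus ?thesis using bt g1 by (intro exI[of _ f]) simp
qed

lemma ext_lo: "\<exists>f. bounded_turning f \<and> cmod (gamma2 f) - cmod (gamma1 f) = - 1 / sqrt 5"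
proof -
  define u where "u = complex_of_real (2 / sqrt 5)"
  have u2: "u^2 = 4/5" unfolding u_def
  proof -
    have "(2 / sqrt 5)^2 = (4/5::real)" by (simp add: power_divide)
    have "(complex_of_real (2 / sqrt 5))^2 = complex_of_real ((2 / sqrt 5)^2)"
      by (rule of_real_power[symmetric])
    also have "\<dots> = complex_of_real (4/5)" by (simp only: \<open>(2 / sqrt 5)^2 = (4/5::real)\<close>)
    also have "\<dots> = 4/5" by simp
    finally show "(complex_of_real (2 / sqrt 5))^2 = 4/5" .
  qed
  have cu: "cnj u = u" by (simp add: u_def)
  have nu: "cmod u = 2 / sqrt 5" unfolding u_def norm_of_real by simp
  have nu1: "cmod u < 1"
  proof -
    have "(cmod u)^2 = 4/5" unfolding nu by (simp add: power_divide)
    hence "(cmod u)^2 < 1" by simp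
    thus ?thesis by (simp add: abs_square_less_1)
  qed
  define Dn where "Dn z = 1 - 2*u*z + z^2" for z
  define p where "p z = (1 - z^2) / Dn z" for z
  have key: "Dn z \<noteq> 0 \<and> Re (p z) > 0" if "z \<in> ball 0 1" for z
  proof -
    have z1: "cmod z < 1" using that by simp
    have mo: "cmod ((z - u) / (1 - u * z)) < 1"
      using Moebius_function_norm_lt_1[OF nu1 z1, of 0] by (simp add: Moebius_function_simple cu)
    have d: "1 - u * z \<noteq> 0"
    proof
      assume "1 - u * z = 0"
      hence "u * z = 1" by simp
      hence "cmod (u * z) = 1" by simp
      hence "cmod u * cmod z = 1" by (simp only: norm_mult)
      moreover have "cmod u * cmod z < 1"
      proof -
        have "cmod u * cmod z \<le> cmod z" by (rule mult_left_le_one_le) (use nu1 in auto)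
        thus ?thesis using z1 by simp
      qed
      ultimately show False by simp
    qed
    define w where "w = z * (u - z) / (1 - u * z)"
    have nw: "cmod w < 1"
    proof -
      have "cmod w = cmod z * cmod ((z - u) / (1 - u * z))"
        unfolding w_def by (simp add: norm_mult norm_divide norm_minus_commute)
      also have "\<dots> \<le> cmod ((z - u) / (1 - u * z))" by (rule mult_left_le_one_le) (use z1 in auto)
      finally show ?thesis using mo by simp
    qed
    have w1: "1 - w \<noteq> 0" using nw by auto
    have ww: "w * (1 - u * z) = z * (u - z)" unfolding w_def using d by simp
    have e1: "Dn z = (1 - w) * (1 - u * z)"
    proof -
      have "(1 - w) * (1 - u * z) = (1 - u * z) - w * (1 - u * z)" by (simp add: left_diff_distrib)
      also have "\<dots> = (1 - u * z) - z * (u - z)" by (simp only: ww)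
      also have "\<dots> = Dn z" by (simp add: Dn_def algebra_simps power2_eq_square)
      finally show ?thesis by simp
    qed
    have e2: "1 - z^2 = (1 + w) * (1 - u * z)"
    proof -
      have "(1 + w) * (1 - u * z) = (1 - u * z) + w * (1 - u * z)" by (simp add: distrib_right)
      also have "\<dots> = (1 - u * z) + z * (u - z)" by (simp only: ww)
      also have "\<dots> = 1 - z^2" by (simp add: algebra_simps power2_eq_square)
      finally show ?thesis by simp
    qed
    have "p z = (1 + w) / (1 - w)" unfolding p_def e1 e2 using d w1 by simp
    thus ?thesis using e1 d w1 re_pos_frac[OF nw] by simp
  qed
  have ph: "p holomorphic_on ball 0 1" unfolding p_def[abs_def] Dn_def[abs_def]
    using key by (intro holomorphic_intros) (auto simp: Dn_def)
  have p0: "p 0 = 1" by (simp add: p_def Dn_def)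
  define P1 where "P1 z = (-(2*z) * Dn z - (1 - z^2) * (2*z - 2*u)) / (Dn z * Dn z)" for z
  have dD: "(Dn has_field_derivative (2*z - 2*u)) (at z)" for z
    unfolding Dn_def[abs_def] by (auto intro!: derivative_eq_intros)
  have d1: "(p has_field_derivative P1 z) (at z)" if "z \<in> ball 0 1" for z
  proof -
    have n: "((\<lambda>z. 1 - z^2) has_field_derivative -(2*z)) (at z)" by (auto intro!: derivative_eq_intros)
    show ?thesis unfolding p_def[abs_def] P1_def
      by (rule DERIV_divide[OF n dD]) (use key[OF that] in simp)
  qed
  have d2: "(P1 has_field_derivative (8*u^2 - 4)) (at 0)"
  proof -
    have D0: "Dn 0 = 1" by (simp add: Dn_def)
    have dA: "((\<lambda>z. -(2*z)) has_field_derivative -2) (at 0)" by (auto intro!: derivative_eq_intros)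
    have dB: "((\<lambda>z. 1 - z^2) has_field_derivative 0) (at (0::complex))" by (auto intro!: derivative_eq_intros)
    have dC: "((\<lambda>z. 2*z - 2*u) has_field_derivative 2) (at 0)" by (auto intro!: derivative_eq_intros)
    note dN = DERIV_diff[OF DERIV_mult[OF dA dD[of 0]] DERIV_mult[OF dB dC]]
    note dDD = DERIV_mult[OF dD[of 0] dD[of 0]]
    show ?thesis unfolding P1_def[abs_def]
      by (rule DERIV_cong[OF DERIV_divide[OF dN dDD]]) (simp_all add: D0 algebra_simps power2_eq_square)
  qed
  obtain f where bt: "bounded_turning f" and a2: "taylor_coeff f 2 = deriv p 0 / 2"
      and a3: "taylor_coeff f 3 = deriv (deriv p) 0 / 6"
    using ext[OF ph p0] key by blast
  have P10: "P1 0 = 2 * u" by (simp add: P1_def Dn_def)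
  have g1: "gamma1 f = u / 2" and g2: "gamma2 f = 0"
    using deriv2[OF d1 d2] unfolding gamma1_def gamma2_def a2 a3 P10
    by (simp_all add: u2 power_divide)
  have "cmod (gamma1 f) = 1 / sqrt 5" unfolding g1 nu by (simp add: norm_divide nu)
  thus ?thesis using bt g2 by (intro exI[of _ f]) simp
qed

theorem mainTheorem8:
  shows "(\<forall>f. bounded_turning f \<longrightarrow>
            - 1 / sqrt 5 \<le> cmod (gamma2 f) - cmod (gamma1 f) \<and>
            cmod (gamma2 f) - cmod (gamma1 f) \<le> 1 / 3)
       \<and> (\<exists>f. bounded_turning f \<and> cmod (gamma2 f) - cmod (gamma1 f) = - 1 / sqrt 5)
       \<and> (\<exists>f. bounded_turning f \<and> cmod (gamma2 f) - cmod (gamma1 f) = 1 / 3)"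
proof -
  have "- 1 / sqrt 5 \<le> cmod (gamma2 f) - cmod (gamma1 f) \<and>
            cmod (gamma2 f) - cmod (gamma1 f) \<le> 1 / 3" if bt: "bounded_turning f" for f
  proof -
    obtain u v where uv: "cmod u \<le> 1" "cmod v \<le> 1 - (cmod u)^2" and g: "gamma1 f = u/2" "gamma2 f = v/3 + u^2/12"
      using key[OF bt] by blast
    show ?thesis unfolding g using ineq[OF uv] .
  qed
  thus ?thesis using ext_lo ext_up by blast
qed

end
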